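(* Let $P,Q$ be posets and $f:P\to Q$ an isotone map. There is a unique monoid homomorphism $\mathcal{M}(f):\mathcal{M}(P)\to\mathcal{M}(Q)$ with $\mathcal{M}(f)([x,y]_P)=[f(x),f(y)]_Q$ for all $x\le y$ in $P$. Moreover, if $f$ is one-to-one, then $\mathcal{M}(f)$ is one-to-one.
   Context: For a poset $P$, the interval monoid $\mathcal{M}(P)$ is the monoid presented by generators $[x,y]_P$ for $x\le y$ in $P$ and relations $[x,x]_P=1$ ($x\in P$) and $[x,z]_P=[x,y]_P[y,z]_P$ whenever $x\le y\le z$. A map $f$ is isotone if $x\le y$ implies $f(x)\le f(y)$. *)

theory Defs
  imports "HOL-Algebra.Group"
begin

text \<open>Generators [x,y] (x \<le> y) are the pairs (x,y) \<in> r;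
  words in the generators are lists over r.  interval_cong A r is the monoid
  congruence on words generated by the defining relations
  [x,x] = 1 and [x,z] = [x,y][y,z].\<close>

inductive interval_cong :: "'a set \<Rightarrow> ('a \<times> 'a) set \<Rightarrow> ('a \<times> 'a) list \<Rightarrow> ('a \<times> 'a) list \<Rightarrow> bool"
  for A :: "'a set" and r :: "('a \<times> 'a) set" where
  ic_refl: "w \<in> lists r \<Longrightarrow> interval_cong A r w w"
| ic_sym: "interval_cong A r u v \<Longrightarrow> interval_cong A r v u"
| ic_trans: "interval_cong A r u v \<Longrightarrow> interval_cong A r v w \<Longrightarrow> interval_cong A r u w"
| ic_unit: "x \<in> A \<Longrightarrow> u \<in> lists r \<Longrightarrow> v \<in> lists r \<Longrightarrow>
    interval_cong A r (u @ [(x, x)] @ v) (u @ v)"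
| ic_split: "(x, y) \<in> r \<Longrightarrow> (y, z) \<in> r \<Longrightarrow> u \<in> lists r \<Longrightarrow> v \<in> lists r \<Longrightarrow>
    interval_cong A r (u @ [(x, z)] @ v) (u @ [(x, y), (y, z)] @ v)"

definition ic_class :: "'a set \<Rightarrow> ('a \<times> 'a) set \<Rightarrow> ('a \<times> 'a) list \<Rightarrow> ('a \<times> 'a) list set" where
  "ic_class A r w = {w'. interval_cong A r w w'}"

definition interval_monoid :: "'a set \<Rightarrow> ('a \<times> 'a) set \<Rightarrow> ('a \<times> 'a) list set monoid" where
  "interval_monoid A r =
     \<lparr> carrier = ic_class A r ` lists r,
       mult = (\<lambda>X Y. \<Union>u\<in>X. \<Union>v\<in>Y. ic_class A r (u @ v)),
       one = ic_class A r [] \<rparr>"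

definition interval_gen :: "'a set \<Rightarrow> ('a \<times> 'a) set \<Rightarrow> 'a \<Rightarrow> 'a \<Rightarrow> ('a \<times> 'a) list set" where
  "interval_gen A r x y = ic_class A r [(x, y)]"

definition isotone_on :: "'a set \<Rightarrow> ('a \<times> 'a) set \<Rightarrow> 'b set \<Rightarrow> ('b \<times> 'b) set \<Rightarrow> ('a \<Rightarrow> 'b) \<Rightarrow> bool" where
  "isotone_on A r B s f \<longleftrightarrow> f \<in> A \<rightarrow> B \<and> (\<forall>x y. (x, y) \<in> r \<longrightarrow> (f x, f y) \<in> s)"

definition monoid_hom :: "('c, 'm) monoid_scheme \<Rightarrow> ('d, 'n) monoid_scheme \<Rightarrow> ('c \<Rightarrow> 'd) \<Rightarrow> bool" where
  "monoid_hom G H h \<longleftrightarrow> h \<in> hom G H \<and> h \<one>\<^bsub>G\<^esub> = \<one>\<^bsub>H\<^esub>"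

end

theory Submission
  imports Defs
begin

lemma ic_lists:
  assumes "interval_cong A r u v" "\<forall>x\<in>A. (x,x) \<in> r" "trans r"
  shows "u \<in> lists r \<and> v \<in> lists r"
  using assms
proof (induction rule: interval_cong.induct)
  case (ic_split x y z u v)
  then have "(x,z) \<in> r" by (meson transE)
  then show ?case using ic_split by simp
qed auto

lemma ic_app_left:
  assumes "interval_cong A r u v" "w \<in> lists r" "\<forall>x\<in>A. (x,x) \<in> r"
  shows "interval_cong A r (w@u) (w@v)"
  using assms
proof (induction rule: interval_cong.induct)
  case (ic_refl w') then show ?case by (intro interval_cong.ic_refl) simp
next
  case (ic_sym u v) then show ?case by (auto intro: interval_cong.ic_sym)
next
  case (ic_trans u v w') then show ?case by (auto intro: interval_cong.ic_trans)
next
  case (ic_unit x u v) then show ?case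
    using interval_cong.ic_unit[of x A "w@u" r v] by auto
next
  case (ic_split x y z u v) then show ?case
    using interval_cong.ic_split[of x y r z "w@u" v A] by auto
qed

lemma ic_app_right:
  assumes "interval_cong A r u v" "w \<in> lists r" "\<forall>x\<in>A. (x,x) \<in> r"
  shows "interval_cong A r (u@w) (v@w)"
  using assms
proof (induction rule: interval_cong.induct)
  case (ic_refl w') then show ?case by (intro interval_cong.ic_refl) simp
next
  case (ic_sym u v) then show ?case by (auto intro: interval_cong.ic_sym)
next
  case (ic_trans u v w') then show ?case by (auto intro: interval_cong.ic_trans)
next
  case (ic_unit x u v) then show ?case
    using interval_cong.ic_unit[of x A u r "v@w"] by auto
next
  case (ic_split x y z u v) then show ?case
    using interval_cong.ic_split[of x y r z u "v@w" A] by auto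
qed

lemma ic_app:
  assumes "interval_cong A r u u'" "interval_cong A r v v'" "\<forall>x\<in>A. (x,x) \<in> r" "trans r"
  shows "interval_cong A r (u@v) (u'@v')"
proof -
  have "v \<in> lists r" "u' \<in> lists r" using ic_lists assms by blast+
  then show ?thesis using assms
    by (meson ic_app_left ic_app_right interval_cong.ic_trans)
qed

fun cstep :: "('a \<times> 'a) \<Rightarrow> ('a \<times> 'a) list \<Rightarrow> ('a \<times> 'a) list" where
  "cstep (x,y) [] = (if x = y then [] else [(x,y)])"
| "cstep (x,y) ((y',t)#w) = (if x = y then (y',t)#w else if y' = y then
     (if x = t then w else (x,t)#w) else (x,y)#(y',t)#w)"

definition nf :: "('a \<times> 'a) list \<Rightarrow> ('a \<times> 'a) list" where
  "nf w = foldr cstep w []"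

fun normal :: "('a \<times> 'a) list \<Rightarrow> bool" where
  "normal [] = True"
| "normal [a] = True"
| "normal (a#b#w) = (snd a \<noteq> fst b \<and> normal (b#w))"

lemma normal_tl: "normal (a#w) \<Longrightarrow> normal w"
  by (cases w) auto

lemma cstep_normal: "normal w \<Longrightarrow> normal (cstep a w)"
proof (cases a)
  case (Pair x y)
  assume n: "normal w"
  show ?thesis
  proof (cases w)
    case Nil then show ?thesis using Pair by auto
  next
    case (Cons b w1)
    obtain p t where b: "b = (p,t)" by (cases b)
    show ?thesis
    proof (cases w1)
      case Nil then show ?thesis using Pair Cons b n by auto
    next
      case (Cons c w2)
      then show ?thesis using Pair \<open>w = b # w1\<close> b n by (cases c) auto
    qed
  qed
qed

lemma nf_normal: "normal (foldr cstep w [])"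
  by (induction w) (auto intro: cstep_normal)

lemma cstep_triv: "cstep (x,x) w = w"
  by (cases w) auto

lemma cstep_split:
  assumes "normal w" "(x,y) \<in> r" "(y,z) \<in> r" "antisym r"
  shows "cstep (x,z) w = cstep (x,y) (cstep (y,z) w)"
proof -
  have xz: "x = z \<Longrightarrow> x = y" using assms by (auto dest: antisymD)
  show ?thesis
  proof (cases w)
    case Nil then show ?thesis using xz by auto
  next
    case (Cons b w1)
    obtain p t where b: "b = (p,t)" by (cases b)
    show ?thesis
    proof (cases w1)
      case Nil then show ?thesis using Cons b xz by auto
    next
      case (Cons c w2)
      obtain q u where c: "c = (q,u)" by (cases c)
      show ?thesis using \<open>w = b # w1\<close> Cons b c xz assms(1) by auto
    qed
  qed
qed

lemma cstep_AA: "set w \<subseteq> A \<times> A \<Longrightarrow> a \<in> A \<times> A \<Longrightarrow> set (cstep a w) \<subseteq> A \<times> A"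
  by (cases a; cases w) (auto split: if_splits)

lemma cstep_lists:
  assumes h: "w \<in> lists r" "a \<in> r" "trans r"
  shows "cstep a w \<in> lists r"
proof -
  obtain x y where a: "a = (x,y)" by (cases a)
  show ?thesis
  proof (cases w)
    case Nil then show ?thesis using h a by auto
  next
    case (Cons b w1)
    obtain p t where b: "b = (p,t)" by (cases b)
    show ?thesis
    proof (cases "x \<noteq> y \<and> p = y")
      case True
      then have "(y,t) \<in> r" "(x,y) \<in> r" using h a b Cons by auto
      then have "(x,t) \<in> r" using h by (meson transE)
      then show ?thesis using h a b Cons by auto
    next
      case False
      then show ?thesis using h a b Cons by auto
    qed
  qed
qed

lemma cstep_map:
  assumes "set w \<subseteq> A \<times> A" "a \<in> A \<times> A" "inj_on f A"
  shows "cstep (map_prod f f a) (map (map_prod f f) w) = map (map_prod f f) (cstep a w)"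
proof -
  have e: "\<And>p q. p \<in> A \<Longrightarrow> q \<in> A \<Longrightarrow> (f p = f q) = (p = q)"
    using assms(3) by (auto dest: inj_onD)
  show ?thesis
  proof (cases w)
    case Nil then show ?thesis using assms e by (cases a) auto
  next
    case (Cons b w1)
    then show ?thesis using assms e by (cases a; cases b) auto
  qed
qed

lemma nf_AA: "set w \<subseteq> A \<times> A \<Longrightarrow> set (foldr cstep w []) \<subseteq> A \<times> A"
proof (induction w)
  case (Cons a w)
  then have "set (foldr cstep w []) \<subseteq> A \<times> A" "a \<in> A \<times> A" by auto
  then show ?case using cstep_AA by simp
qed simp

lemma nf_map:
  assumes "set w \<subseteq> A \<times> A" "inj_on f A"
  shows "foldr cstep (map (map_prod f f) w) [] = map (map_prod f f) (foldr cstep w [])"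
  using assms
proof (induction w)
  case Nil then show ?case by simp
next
  case (Cons a w)
  then show ?case using cstep_map[of "foldr cstep w []" A a f] nf_AA[of w A] by auto
qed

lemma cstep_cong:
  assumes "w \<in> lists r" "a \<in> r" "r \<subseteq> A \<times> A" "\<forall>x\<in>A. (x,x) \<in> r" "trans r"
  shows "interval_cong A r (a#w) (cstep a w)"
proof -
  obtain x y where a: "a = (x,y)" by (cases a)
  show ?thesis
  proof (cases "x = y")
    case True
    then have "x \<in> A" using assms a by auto
    then show ?thesis using interval_cong.ic_unit[of x A "[]" r w] assms True a
      by (auto simp: cstep_triv)
  next
    case False
    show ?thesis
    proof (cases w)
      case Nil then show ?thesis using False a assms by (auto intro: interval_cong.ic_refl)
    next
      case (Cons b w1)
      obtain p t where b: "b = (p,t)" by (cases b)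
      show ?thesis
      proof (cases "p = y")
        case py: True
        have xt: "(x,t) \<in> r" using assms a b Cons py by (auto dest: transD)
        have w1: "w1 \<in> lists r" using assms Cons by auto
        have s: "interval_cong A r ((x,y)#(y,t)#w1) ((x,t)#w1)"
          using interval_cong.ic_split[of x y r t "[]" w1 A] assms a b Cons py xt w1
          by (auto intro: interval_cong.ic_sym)
        show ?thesis
        proof (cases "x = t")
          case True
          have "x \<in> A" using assms a by auto
          then have "interval_cong A r ((x,t)#w1) w1"
            using interval_cong.ic_unit[of x A "[]" r w1] w1 True by auto
          then show ?thesis using s a b Cons py True False
            by (auto intro: interval_cong.ic_trans)
        next
          case False
          then show ?thesis using s a b Cons py \<open>x \<noteq> y\<close> by auto
        qed
      next
        case False
        then have "cstep a w = a # w" using \<open>x \<noteq> y\<close> a b Cons by auto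
        then show ?thesis using assms by (metis interval_cong.ic_refl Cons_in_lists_iff)
      qed
    qed
  qed
qed

lemma nf_cong:
  assumes "w \<in> lists r" "r \<subseteq> A \<times> A" "\<forall>x\<in>A. (x,x) \<in> r" "trans r"
  shows "interval_cong A r w (foldr cstep w []) \<and> foldr cstep w [] \<in> lists r"
  using assms(1)
proof (induction w)
  case Nil then show ?case by (auto intro: interval_cong.ic_refl)
next
  case (Cons a w)
  then have IH: "interval_cong A r w (foldr cstep w [])" "foldr cstep w [] \<in> lists r" "a \<in> r" by auto
  have "interval_cong A r ([a]@w) ([a]@foldr cstep w [])"
    using ic_app_left[OF IH(1), of "[a]"] IH assms by auto
  moreover have "interval_cong A r (a#foldr cstep w []) (cstep a (foldr cstep w []))"
    using cstep_cong IH assms by blast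
  moreover have "cstep a (foldr cstep w []) \<in> lists r" using cstep_lists IH assms by blast
  ultimately show ?case 
    by (auto intro: interval_cong.ic_trans)
qed

lemma nf_inv:
  assumes "interval_cong A r u v" "antisym r"
  shows "foldr cstep u [] = foldr cstep v []"
  using assms
proof (induction rule: interval_cong.induct)
  case (ic_unit x u v) then show ?case by (simp add: cstep_triv)
next
  case (ic_split x y z u v) then show ?case
    using cstep_split[OF nf_normal[of v], of x y r z] by simp
qed auto

lemma map_cong:
  assumes "interval_cong A r u v" "isotone_on A r B s f"
  shows "interval_cong B s (map (map_prod f f) u) (map (map_prod f f) v)"
  using assms
proof (induction rule: interval_cong.induct)
  case (ic_refl w) then show ?case
    by (auto simp: isotone_on_def intro!: interval_cong.ic_refl)
next
  case (ic_sym u v) then show ?case by (auto intro: interval_cong.ic_sym)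
next
  case (ic_trans u v w) then show ?case by (auto intro: interval_cong.ic_trans)
next
  case (ic_unit x u v)
  have "f x \<in> B" "map (map_prod f f) u \<in> lists s" "map (map_prod f f) v \<in> lists s"
    using ic_unit by (auto simp: isotone_on_def)
  then show ?case using interval_cong.ic_unit[of "f x" B "map (map_prod f f) u" s "map (map_prod f f) v"]
    by simp
next
  case (ic_split x y z u v)
  have "(f x, f y) \<in> s" "(f y, f z) \<in> s" "map (map_prod f f) u \<in> lists s" "map (map_prod f f) v \<in> lists s"
    using ic_split by (auto simp: isotone_on_def)
  then show ?case using interval_cong.ic_split[of "f x" "f y" s "f z" "map (map_prod f f) u" "map (map_prod f f) v" B]
    by simp
qed

lemma cls_eq:
  assumes "interval_cong A r u v"
  shows "ic_class A r u = ic_class A r v"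
  using assms unfolding ic_class_def
  by (auto intro: interval_cong.ic_trans interval_cong.ic_sym)

lemma cls_mem: "w \<in> lists r \<Longrightarrow> w \<in> ic_class A r w"
  by (auto simp: ic_class_def intro: interval_cong.ic_refl)

lemma cls_eqD:
  assumes "ic_class A r u = ic_class A r v" "u \<in> lists r"
  shows "interval_cong A r u v"
proof -
  have "u \<in> ic_class A r v" using assms cls_mem by metis
  then show ?thesis by (auto simp: ic_class_def intro: interval_cong.ic_sym)
qed

lemma cls_mult:
  assumes "u \<in> lists r" "v \<in> lists r" "\<forall>x\<in>A. (x,x) \<in> r" "trans r"
  shows "ic_class A r u \<otimes>\<^bsub>interval_monoid A r\<^esub> ic_class A r v = ic_class A r (u@v)"
proof -
  have "\<forall>u'\<in>ic_class A r u. \<forall>v'\<in>ic_class A r v. ic_class A r (u'@v') = ic_class A r (u@v)"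
  proof (intro ballI)
    fix u' v' assume "u' \<in> ic_class A r u" "v' \<in> ic_class A r v"
    then have "interval_cong A r (u@v) (u'@v')" using assms unfolding ic_class_def by (intro ic_app) auto
    then show "ic_class A r (u'@v') = ic_class A r (u@v)" by (rule cls_eq[symmetric])
  qed
  note H = this
  have ne: "ic_class A r u \<noteq> {}" "ic_class A r v \<noteq> {}"
    using cls_mem[OF assms(1), of A] cls_mem[OF assms(2), of A] by auto
  have "ic_class A r u \<otimes>\<^bsub>interval_monoid A r\<^esub> ic_class A r v
     = (\<Union>u'\<in>ic_class A r u. \<Union>v'\<in>ic_class A r v. ic_class A r (u'@v'))"
    by (simp add: interval_monoid_def)
  also have "\<dots> = (\<Union>u'\<in>ic_class A r u. \<Union>v'\<in>ic_class A r v. ic_class A r (u@v))"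
    using H by (intro SUP_cong refl) simp
  also have "\<dots> = ic_class A r (u@v)" using ne by (simp add: SUP_const)
  finally show ?thesis .
qed

definition hF :: "('a \<Rightarrow> 'b) \<Rightarrow> 'b set \<Rightarrow> ('b \<times> 'b) set \<Rightarrow> ('a \<times> 'a) list set \<Rightarrow> ('b \<times> 'b) list set" where
  "hF f B s X = (\<Union>w\<in>X. ic_class B s (map (map_prod f f) w))"

lemma hF_cls:
  assumes "u \<in> lists r" "isotone_on A r B s f"
  shows "hF f B s (ic_class A r u) = ic_class B s (map (map_prod f f) u)"
proof -
  have "\<forall>w\<in>ic_class A r u. ic_class B s (map (map_prod f f) w) = ic_class B s (map (map_prod f f) u)"
  proof
    fix w assume "w \<in> ic_class A r u"
    then have "interval_cong B s (map (map_prod f f) u) (map (map_prod f f) w)"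
      using assms unfolding ic_class_def by (intro map_cong) auto
    then show "ic_class B s (map (map_prod f f) w) = ic_class B s (map (map_prod f f) u)" by (rule cls_eq[symmetric])
  qed
  then have "hF f B s (ic_class A r u) = (\<Union>w\<in>ic_class A r u. ic_class B s (map (map_prod f f) u))"
    unfolding hF_def by (intro SUP_cong refl) simp
  also have "\<dots> = ic_class B s (map (map_prod f f) u)"
    using cls_mem[OF assms(1), of A] by (subst SUP_const) auto
  finally show ?thesis .
qed

theorem lemma8p1:
  fixes A :: "'a set" and r :: "('a \<times> 'a) set"
    and B :: "'b set" and s :: "('b \<times> 'b) set"
    and f :: "'a \<Rightarrow> 'b"
  assumes "partial_order_on A r" and "r \<subseteq> A \<times> A"
    and "partial_order_on B s" and "s \<subseteq> B \<times> B"
    and "isotone_on A r B s f"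
  shows "\<exists>h. monoid_hom (interval_monoid A r) (interval_monoid B s) h
           \<and> (\<forall>x y. (x, y) \<in> r \<longrightarrow> h (interval_gen A r x y) = interval_gen B s (f x) (f y))
           \<and> (\<forall>h'. monoid_hom (interval_monoid A r) (interval_monoid B s) h'
                  \<and> (\<forall>x y. (x, y) \<in> r \<longrightarrow> h' (interval_gen A r x y) = interval_gen B s (f x) (f y))
                  \<longrightarrow> (\<forall>X \<in> carrier (interval_monoid A r). h' X = h X))
           \<and> (inj_on f A \<longrightarrow> inj_on h (carrier (interval_monoid A r)))"
proof -
  have reflA: "\<forall>x\<in>A. (x,x) \<in> r" and trA: "trans r" and asA: "antisym r"
    using assms(1) by (auto simp: partial_order_on_def preorder_on_def refl_on_def)
  have reflB: "\<forall>x\<in>B. (x,x) \<in> s" and trB: "trans s"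
    using assms(3) by (auto simp: partial_order_on_def preorder_on_def refl_on_def)
  have ml: "\<And>u. u \<in> lists r \<Longrightarrow> map (map_prod f f) u \<in> lists s"
    using assms(5) by (auto simp: isotone_on_def)
  define h where "h = hF f B s"
  have hc: "\<And>u. u \<in> lists r \<Longrightarrow> h (ic_class A r u) = ic_class B s (map (map_prod f f) u)"
    unfolding h_def using hF_cls assms(5) by blast
  have hom: "monoid_hom (interval_monoid A r) (interval_monoid B s) h"
    unfolding monoid_hom_def
  proof
    show "h \<in> hom (interval_monoid A r) (interval_monoid B s)"
    proof (rule homI)
      fix X assume "X \<in> carrier (interval_monoid A r)"
      then obtain u where "u \<in> lists r" "X = ic_class A r u" by (auto simp: interval_monoid_def)
      then show "h X \<in> carrier (interval_monoid B s)"
        using hc ml by (auto simp: interval_monoid_def)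
    next
      fix X Y assume "X \<in> carrier (interval_monoid A r)" "Y \<in> carrier (interval_monoid A r)"
      then obtain u v where "u \<in> lists r" "X = ic_class A r u" "v \<in> lists r" "Y = ic_class A r v"
        by (auto simp: interval_monoid_def)
      then show "h (X \<otimes>\<^bsub>interval_monoid A r\<^esub> Y) = h X \<otimes>\<^bsub>interval_monoid B s\<^esub> h Y"
        using cls_mult[of u r v A] cls_mult[of "map (map_prod f f) u" s "map (map_prod f f) v" B]
          hc ml reflA reflB trA trB by simp
    qed
  next
    show "h \<one>\<^bsub>interval_monoid A r\<^esub> = \<one>\<^bsub>interval_monoid B s\<^esub>"
      using hc[of "[]"] by (simp add: interval_monoid_def)
  qed
  have gen: "\<forall>x y. (x, y) \<in> r \<longrightarrow> h (interval_gen A r x y) = interval_gen B s (f x) (f y)"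
    using hc by (auto simp: interval_gen_def)
  have uniq: "\<forall>h'. monoid_hom (interval_monoid A r) (interval_monoid B s) h'
                  \<and> (\<forall>x y. (x, y) \<in> r \<longrightarrow> h' (interval_gen A r x y) = interval_gen B s (f x) (f y))
                  \<longrightarrow> (\<forall>X \<in> carrier (interval_monoid A r). h' X = h X)"
  proof (intro allI impI ballI)
    fix h' X
    assume a: "monoid_hom (interval_monoid A r) (interval_monoid B s) h'
                  \<and> (\<forall>x y. (x, y) \<in> r \<longrightarrow> h' (interval_gen A r x y) = interval_gen B s (f x) (f y))"
      and X: "X \<in> carrier (interval_monoid A r)"
    then obtain u where u: "u \<in> lists r" "X = ic_class A r u" by (auto simp: interval_monoid_def)
    have "h' (ic_class A r u) = h (ic_class A r u)" using u(1)
    proof (induction u)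
      case Nil
      then show ?case using a hom by (simp add: monoid_hom_def interval_monoid_def)
    next
      case (Cons b w)
      obtain x y where b: "b = (x,y)" by (cases b)
      have bw: "b \<in> r" "w \<in> lists r" using Cons by auto
      have m: "ic_class A r (b#w) = ic_class A r [b] \<otimes>\<^bsub>interval_monoid A r\<^esub> ic_class A r w"
        using cls_mult[of "[b]" r w A] bw reflA trA by simp
      have c1: "ic_class A r [b] \<in> carrier (interval_monoid A r)"
        "ic_class A r w \<in> carrier (interval_monoid A r)"
        using bw by (auto simp: interval_monoid_def)
      have "h' (ic_class A r (b#w)) = h' (ic_class A r [b]) \<otimes>\<^bsub>interval_monoid B s\<^esub> h' (ic_class A r w)"
        using m hom_mult[OF _ c1, of h' "interval_monoid B s"] a
        by (simp add: monoid_hom_def)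
      also have "\<dots> = h (ic_class A r [b]) \<otimes>\<^bsub>interval_monoid B s\<^esub> h (ic_class A r w)"
        using a gen Cons bw b by (simp add: interval_gen_def)
      also have "\<dots> = h (ic_class A r (b#w))"
        using m hom_mult[OF _ c1, of h "interval_monoid B s"] hom
        by (simp add: monoid_hom_def)
      finally show ?case .
    qed
    then show "h' X = h X" using u by simp
  qed
  have inj: "inj_on f A \<longrightarrow> inj_on h (carrier (interval_monoid A r))"
  proof (intro impI inj_onI)
    fix X Y assume i: "inj_on f A" and X: "X \<in> carrier (interval_monoid A r)"
      and Y: "Y \<in> carrier (interval_monoid A r)" and e: "h X = h Y"
    obtain u v where u: "u \<in> lists r" "X = ic_class A r u" and v: "v \<in> lists r" "Y = ic_class A r v"
      using X Y by (auto simp: interval_monoid_def)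
    have "interval_cong B s (map (map_prod f f) u) (map (map_prod f f) v)"
      using e hc u v ml cls_eqD by metis
    then have "foldr cstep (map (map_prod f f) u) [] = foldr cstep (map (map_prod f f) v) []"
      using nf_inv assms(3) by (metis partial_order_on_def)
    moreover have uA: "set u \<subseteq> A \<times> A" "set v \<subseteq> A \<times> A" using u v assms(2) by auto
    ultimately have "map (map_prod f f) (foldr cstep u []) = map (map_prod f f) (foldr cstep v [])"
      using nf_map i by metis
    moreover have "inj_on (map_prod f f) (A \<times> A)" using map_prod_inj_on[OF i i] .
    ultimately have "foldr cstep u [] = foldr cstep v []"
      using nf_AA[OF uA(1)] nf_AA[OF uA(2)]
      by (metis inj_on_map_eq_map inj_on_subset Un_subset_iff)
    then have "interval_cong A r u v"
      using nf_cong[OF u(1) assms(2) reflA trA] nf_cong[OF v(1) assms(2) reflA trA]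
      by (metis interval_cong.ic_sym interval_cong.ic_trans)
    then show "X = Y" using u v cls_eq by metis
  qed
  show ?thesis using hom gen uniq inj by blast
qed

end
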